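(* Let $\mu,\tau$ be distributions over $\{0,1\}^n$, let $T$ be a transfer distribution between $\mu$ and $\tau$ achieving $d_{EM}(\mu,\tau)=\mathbb{E}_{(x,y)\sim T}[d_H(x,y)]$, and let $\Xi$ be a distribution over $\{0,1\}^n\times\{0,1\}^n\times A$ ($A$ finite) with $\Xi|_{1,2}=T$. Let $\eta=\Xi|_3$, let $\Lambda^*$ be the type distribution of the detailing $\Xi|_{1,3}$ of $\mu$, and $\Upsilon^*$ the type distribution of the detailing $\Xi|_{2,3}$ of $\tau$. Then $d^\eta_{EM}(\Lambda^*,\Upsilon^* )\le d_{EM}(\mu,\tau)$.
   Context: $d_H$ is normalized Hamming distance and $d_{EM}(\mu,\tau)=\min_T\mathbb{E}_T[d_H]$ over transfer distributions (couplings with marginals $\mu,\tau$). For a detailing $\zeta$ (a distribution on $\{0,1\}^n\times A$), the type of $i\in[n]$ is $t_i(a)=\Pr_{x\sim\zeta|_1^{2:a}}[x_i=1]$ when $\zeta|_2(a)>0$ and $0$ otherwise, and the type distribution is the law of $t_{\mathbf i}$ for uniform $\mathbf i\in[n]$. $d^\eta_{\ell_1}(x,y)=\sum_a\eta(a)|x_a-y_a|$ and $d^\eta_{EM}$ is the Earth Mover distance over it. *)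

theory Defs
  imports "HOL-Probability.Probability"
begin

text \<open>Points of the cube {0,1}^n are boolean lists of length n (True = 1).\<close>

definition hamming :: "nat \<Rightarrow> bool list \<Rightarrow> bool list \<Rightarrow> real" where
  "hamming n x y = real (card {i. i < n \<and> x ! i \<noteq> y ! i}) / real n"

definition is_transfer :: "('b \<times> 'c) pmf \<Rightarrow> 'b pmf \<Rightarrow> 'c pmf \<Rightarrow> bool" where
  "is_transfer T \<mu> \<tau> \<longleftrightarrow> map_pmf fst T = \<mu> \<and> map_pmf snd T = \<tau>"

definition earth_mover :: "('b \<Rightarrow> 'b \<Rightarrow> real) \<Rightarrow> 'b pmf \<Rightarrow> 'b pmf \<Rightarrow> real" where
  "earth_mover d \<mu> \<tau> =
     Inf {measure_pmf.expectation T (\<lambda>(x, y). d x y) | T. is_transfer T \<mu> \<tau>}"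

definition d_EM :: "nat \<Rightarrow> bool list pmf \<Rightarrow> bool list pmf \<Rightarrow> real" where
  "d_EM n \<mu> \<tau> = earth_mover (hamming n) \<mu> \<tau>"

definition d_l1 :: "'a::finite pmf \<Rightarrow> ('a \<Rightarrow> real) \<Rightarrow> ('a \<Rightarrow> real) \<Rightarrow> real" where
  "d_l1 \<eta> x y = (\<Sum>a\<in>UNIV. pmf \<eta> a * \<bar>x a - y a\<bar>)"

definition d_EM_eta :: "'a::finite pmf \<Rightarrow> ('a \<Rightarrow> real) pmf \<Rightarrow> ('a \<Rightarrow> real) pmf \<Rightarrow> real" where
  "d_EM_eta \<eta> \<Lambda> \<Upsilon> = earth_mover (d_l1 \<eta>) \<Lambda> \<Upsilon>"

definition type_of :: "(bool list \<times> 'a) pmf \<Rightarrow> nat \<Rightarrow> 'a \<Rightarrow> real" where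
  "type_of \<zeta> i a =
     (if pmf (map_pmf snd \<zeta>) a > 0
      then measure_pmf.prob \<zeta> {(x, a'). a' = a \<and> x ! i}
           / pmf (map_pmf snd \<zeta>) a
      else 0)"

definition type_distribution :: "nat \<Rightarrow> (bool list \<times> 'a) pmf \<Rightarrow> ('a \<Rightarrow> real) pmf" where
  "type_distribution n \<zeta> = map_pmf (\<lambda>i. type_of \<zeta> i) (pmf_of_set {..<n})"

end

theory Submission
  imports Defs
begin

lemma integrable_ind_pmf: "integrable (measure_pmf M) (indicator A :: _ \<Rightarrow> real)"
  by (rule measure_pmf.integrable_const_bound[where B=1]) (auto simp: indicator_def)

lemma hamming_sum:
  "hamming n x y = (\<Sum>i<n. indicator {(x,y). x!i \<noteq> y!i} (x,y)) / real n"
proof -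
  have "{i. i < n \<and> x ! i \<noteq> y ! i} = {i\<in>{..<n}. x ! i \<noteq> y ! i}" by auto
  hence "real (card {i. i < n \<and> x ! i \<noteq> y ! i}) = (\<Sum>i\<in>{i\<in>{..<n}. x ! i \<noteq> y ! i}. 1)"
    by simp
  also have "\<dots> = (\<Sum>i<n. if x ! i \<noteq> y ! i then 1 else 0)"
    by (subst sum.inter_filter) auto
  also have "\<dots> = (\<Sum>i<n. indicator {(x,y). x!i \<noteq> y!i} (x,y))"
    by (intro sum.cong) (auto simp: indicator_def)
  finally show ?thesis unfolding hamming_def by simp
qed

lemma exp_hamming:
  "measure_pmf.expectation T (\<lambda>(x, y). hamming n x y)
     = (\<Sum>i<n. measure_pmf.prob T {(x,y). x!i \<noteq> y!i}) / real n"
proof -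
  have "measure_pmf.expectation T (\<lambda>(x, y). hamming n x y)
      = measure_pmf.expectation T (\<lambda>z. (\<Sum>i<n. indicator {(x,y). x!i \<noteq> y!i} z) / real n)"
    by (intro Bochner_Integration.integral_cong) (auto simp: hamming_sum split: prod.splits)
  also have "\<dots> = measure_pmf.expectation T (\<lambda>z. (\<Sum>i<n. indicator {(x,y). x!i \<noteq> y!i} z)) / real n"
    by (rule integral_divide_zero)
  also have "measure_pmf.expectation T (\<lambda>z. (\<Sum>i<n. indicator {(x,y). x!i \<noteq> y!i} z :: real))
     = (\<Sum>i<n. measure_pmf.expectation T (indicator {(x,y). x!i \<noteq> y!i}))"
    by (rule Bochner_Integration.integral_sum) (simp only: integrable_ind_pmf)
  finally show ?thesis by simp
qed

theorem lemma5p5: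
  fixes n :: nat
    and \<mu> \<tau> :: "bool list pmf"
    and T :: "(bool list \<times> bool list) pmf"
    and \<Xi> :: "(bool list \<times> bool list \<times> 'a::finite) pmf"
  assumes "n > 0"
    and "set_pmf \<mu> \<subseteq> {x. length x = n}"
    and "set_pmf \<tau> \<subseteq> {x. length x = n}"
    and "is_transfer T \<mu> \<tau>"
    and "d_EM n \<mu> \<tau> = measure_pmf.expectation T (\<lambda>(x, y). hamming n x y)"
    and "map_pmf (\<lambda>(x, y, a). (x, y)) \<Xi> = T"
  shows "d_EM_eta (map_pmf (\<lambda>(x, y, a). a) \<Xi>)
           (type_distribution n (map_pmf (\<lambda>(x, y, a). (x, a)) \<Xi>))
           (type_distribution n (map_pmf (\<lambda>(x, y, a). (y, a)) \<Xi>))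
         \<le> d_EM n \<mu> \<tau>"
proof -
  define \<eta> where "\<eta> = map_pmf (\<lambda>(x, y, a). a) \<Xi>"
  define \<zeta>1 where "\<zeta>1 = map_pmf (\<lambda>(x, y, a). (x, a)) \<Xi>"
  define \<zeta>2 where "\<zeta>2 = map_pmf (\<lambda>(x, y, a). (y, a)) \<Xi>"
  define t1 where "t1 = type_of \<zeta>1"
  define t2 where "t2 = type_of \<zeta>2"
  define P1 where "P1 i a = measure_pmf.prob \<Xi> {(x,y,a'). a' = a \<and> x!i}" for i a
  define P2 where "P2 i a = measure_pmf.prob \<Xi> {(x,y,a'). a' = a \<and> y!i}" for i a
  define Ds where "Ds i a = {(x::bool list,y::bool list,a'). a' = a \<and> x!i \<noteq> y!i}" for i and a :: 'a
  define C where "C = map_pmf (\<lambda>i. (t1 i, t2 i)) (pmf_of_set {..<n})"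
  have m1: "map_pmf snd \<zeta>1 = \<eta>"
    unfolding \<zeta>1_def \<eta>_def map_pmf_comp by (auto intro!: map_pmf_cong)
  have m2: "map_pmf snd \<zeta>2 = \<eta>"
    unfolding \<zeta>2_def \<eta>_def map_pmf_comp by (auto intro!: map_pmf_cong)
  have q1: "measure_pmf.prob \<zeta>1 {(x,a'). a' = a \<and> x!i} = P1 i a" for i a
    unfolding \<zeta>1_def P1_def measure_map_pmf
    by (rule arg_cong[where f="measure_pmf.prob \<Xi>"]) auto
  have q2: "measure_pmf.prob \<zeta>2 {(x,a'). a' = a \<and> x!i} = P2 i a" for i a
    unfolding \<zeta>2_def P2_def measure_map_pmf
    by (rule arg_cong[where f="measure_pmf.prob \<Xi>"]) auto
  have diff: "P1 i a \<le> P2 i a + measure_pmf.prob \<Xi> (Ds i a)"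
     "P2 i a \<le> P1 i a + measure_pmf.prob \<Xi> (Ds i a)" for i a
  proof -
    have "P1 i a \<le> measure_pmf.prob \<Xi> ({(x,y,a'). a' = a \<and> y!i} \<union> Ds i a)"
      unfolding P1_def Ds_def by (rule measure_pmf.finite_measure_mono) auto
    also have "\<dots> \<le> P2 i a + measure_pmf.prob \<Xi> (Ds i a)"
      unfolding P2_def by (rule measure_Un_le) auto
    finally show "P1 i a \<le> P2 i a + measure_pmf.prob \<Xi> (Ds i a)" .
    have "P2 i a \<le> measure_pmf.prob \<Xi> ({(x,y,a'). a' = a \<and> x!i} \<union> Ds i a)"
      unfolding P2_def Ds_def by (rule measure_pmf.finite_measure_mono) auto
    also have "\<dots> \<le> P1 i a + measure_pmf.prob \<Xi> (Ds i a)"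
      unfolding P1_def by (rule measure_Un_le) auto
    finally show "P2 i a \<le> P1 i a + measure_pmf.prob \<Xi> (Ds i a)" .
  qed
  have key: "pmf \<eta> a * \<bar>t1 i a - t2 i a\<bar> \<le> measure_pmf.prob \<Xi> (Ds i a)" for i a
  proof (cases "pmf \<eta> a > 0")
    case True
    have "t1 i a = P1 i a / pmf \<eta> a" "t2 i a = P2 i a / pmf \<eta> a"
      using True unfolding t1_def t2_def type_of_def m1 m2 q1 q2 by auto
    hence "pmf \<eta> a * \<bar>t1 i a - t2 i a\<bar> = \<bar>P1 i a - P2 i a\<bar>"
      using True by (simp add: abs_mult diff_divide_distrib[symmetric])
    then show ?thesis using diff[of i a] by linarith
  next
    case False
    hence "pmf \<eta> a = 0" using pmf_nonneg[of \<eta> a] by linarith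
    then show ?thesis by simp
  qed
  have sumD: "(\<Sum>a\<in>UNIV. measure_pmf.prob \<Xi> (Ds i a)) = measure_pmf.prob T {(x,y). x!i \<noteq> y!i}" for i
  proof -
    have "(\<Sum>a\<in>UNIV. measure_pmf.prob \<Xi> (Ds i a)) = measure_pmf.prob \<Xi> (\<Union>a\<in>UNIV. Ds i a)"
      by (rule measure_pmf.finite_measure_finite_Union[symmetric])
         (auto simp: disjoint_family_on_def Ds_def)
    also have "(\<Union>a\<in>UNIV. Ds i a) = (\<lambda>(x, y, a). (x, y)) -` {(x,y). x!i \<noteq> y!i}"
      by (auto simp: Ds_def)
    finally show ?thesis unfolding assms(6)[symmetric] measure_map_pmf .
  qed
  have dl: "d_l1 \<eta> (t1 i) (t2 i) \<le> measure_pmf.prob T {(x,y). x!i \<noteq> y!i}" for i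
    unfolding d_l1_def sumD[symmetric] by (intro sum_mono key)
  have tr: "is_transfer C (type_distribution n \<zeta>1) (type_distribution n \<zeta>2)"
    unfolding is_transfer_def C_def type_distribution_def t1_def t2_def
    by (simp add: map_pmf_comp)
  have EC: "measure_pmf.expectation C (\<lambda>(x, y). d_l1 \<eta> x y) = (\<Sum>i<n. d_l1 \<eta> (t1 i) (t2 i)) / real n"
    unfolding C_def integral_map_pmf using assms(1)
    by (subst integral_pmf_of_set) auto
  have nn: "d_l1 \<eta> x y \<ge> 0" for x y
    unfolding d_l1_def by (intro sum_nonneg mult_nonneg_nonneg) auto
  have "d_EM_eta \<eta> (type_distribution n \<zeta>1) (type_distribution n \<zeta>2)
      \<le> measure_pmf.expectation C (\<lambda>(x, y). d_l1 \<eta> x y)"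
    unfolding d_EM_eta_def earth_mover_def
  proof (rule cInf_lower)
    show "measure_pmf.expectation C (\<lambda>(x, y). d_l1 \<eta> x y)
      \<in> {measure_pmf.expectation T (\<lambda>(x, y). d_l1 \<eta> x y) |T. is_transfer T (type_distribution n \<zeta>1) (type_distribution n \<zeta>2)}"
      using tr by blast
    show "bdd_below {measure_pmf.expectation T (\<lambda>(x, y). d_l1 \<eta> x y) |T. is_transfer T (type_distribution n \<zeta>1) (type_distribution n \<zeta>2)}"
      by (rule bdd_belowI[where m=0]) (auto intro!: Bochner_Integration.integral_nonneg simp: nn split: prod.splits)
  qed
  also have "\<dots> \<le> (\<Sum>i<n. measure_pmf.prob T {(x,y). x!i \<noteq> y!i}) / real n"
    unfolding EC by (intro divide_right_mono sum_mono dl) auto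
  also have "\<dots> = d_EM n \<mu> \<tau>" using assms(5) exp_hamming by simp
  finally show ?thesis unfolding \<eta>_def \<zeta>1_def \<zeta>2_def .
qed

end
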